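(* Let $\sigma=(a_1,\ldots,a_s)$ be a partition of $r$ and let $H=H(n,r,q\mid\sigma)$ with $n\ge s$ and $q\ge r$. If $r\mid q$, then $H$ has a perfect matching.
   Context: A $\sigma$-hypergraph $H=H(n,r,q\mid\sigma)$, for a partition $\sigma=(a_1,\ldots,a_s)$ of $r$ with $s$ parts, is the $r$-uniform hypergraph whose vertex set is the disjoint union of $n$ classes $V_1,\ldots,V_n$, each of size $q$; an $r$-subset $K$ of vertices is an edge iff the multiset of non-zero values $|K\cap V_i|$ equals $\sigma$. A perfect matching is a set of pairwise vertex-disjoint edges covering every vertex. *)

theory Defs
  imports Main "HOL-Library.Multiset"
begin

text \<open>Vertex set of H(n,r,q|sigma): classes V_i = {i} x {..<q} for i < n.\<close>
definition sigma_vertices :: "nat \<Rightarrow> nat \<Rightarrow> (nat \<times> nat) set" where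
  "sigma_vertices n q = {..<n} \<times> {..<q}"

definition is_partition :: "nat multiset \<Rightarrow> nat \<Rightarrow> bool" where
  "is_partition \<sigma> r \<longleftrightarrow> 0 \<notin># \<sigma> \<and> sum_mset \<sigma> = r"

definition sigma_edges :: "nat \<Rightarrow> nat \<Rightarrow> nat \<Rightarrow> nat multiset \<Rightarrow> (nat \<times> nat) set set" where
  "sigma_edges n r q \<sigma> = {K. K \<subseteq> sigma_vertices n q \<and> card K = r \<and>
     filter_mset (\<lambda>x. x \<noteq> 0)
       (image_mset (\<lambda>i. card (K \<inter> ({i} \<times> {..<q}))) (mset_set {..<n})) = \<sigma>}"

definition has_perfect_matching :: "nat \<Rightarrow> nat \<Rightarrow> nat \<Rightarrow> nat multiset \<Rightarrow> bool" where
  "has_perfect_matching n r q \<sigma> \<longleftrightarrow>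
     (\<exists>M. M \<subseteq> sigma_edges n r q \<sigma> \<and>
          (\<forall>e\<in>M. \<forall>f\<in>M. e \<noteq> f \<longrightarrow> e \<inter> f = {}) \<and>
          \<Union>M = sigma_vertices n q)"

end

theory Submission
  imports Defs
begin

lemma mod_cancel_aux: "(t+j) mod (n::nat) = (t'+j) mod n \<Longrightarrow> t mod n = t' mod n"
  by (simp add: nat_mod_eq_iff)

lemma div_aux: "k*r \<le> (v::nat) \<Longrightarrow> v < k*r + r \<Longrightarrow> v div r = k"
  by (simp add: div_nat_eqI mult.commute)

lemma find_interval:
  fixes P :: "nat \<Rightarrow> nat"
  assumes "P 0 = 0" "w < P s"
  shows "\<exists>j<s. P j \<le> w \<and> w < P (Suc j)"
  using assms(2)
proof (induction s)
  case 0 then show ?case using assms(1) by simp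
next
  case (Suc s)
  show ?case
  proof (cases "w < P s")
    case True then show ?thesis using Suc.IH by (meson less_Suc_eq)
  next
    case False then show ?thesis using Suc.prems by (intro exI[of _ s]) auto
  qed
qed

theorem lemma3p3:
  fixes n r q :: nat and \<sigma> :: "nat multiset"
  assumes "is_partition \<sigma> r"
    and "n \<ge> size \<sigma>"
    and "q \<ge> r"
    and "r dvd q"
  shows "has_perfect_matching n r q \<sigma>"
proof (cases "r = 0")
  case True
  then have "q = 0" using assms(4) by simp
  then show ?thesis unfolding has_perfect_matching_def sigma_vertices_def
    by (intro exI[of _ "{}"]) auto
next
  case rpos: False
  obtain a where a: "mset a = \<sigma>" using ex_mset by blast
  define s where "s = length a"
  have sn: "s \<le> n" using assms(2) a s_def by auto
  have a0: "0 \<notin> set a" using assms(1) a unfolding is_partition_def by auto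
  have apos: "j < s \<Longrightarrow> a ! j > 0" for j using a0 s_def
    by (metis gr0I nth_mem)
  define P where "P j = (\<Sum>l<j. a ! l)" for j
  have P0: "P 0 = 0" by (simp add: P_def)
  have PSuc: "P (Suc j) = P j + a ! j" for j by (simp add: P_def)
  have Ps: "P s = r"
  proof -
    have "sum_list a = r" using assms(1) a unfolding is_partition_def
      by (metis sum_mset_sum_list)
    then show ?thesis unfolding P_def s_def by (simp add: sum_list_sum_nth atLeast0LessThan)
  qed
  have Pmono: "j \<le> j' \<Longrightarrow> P j \<le> P j'" for j j'
    unfolding P_def by (rule sum_mono2) auto
  have Ple: "j \<le> s \<Longrightarrow> P j \<le> r" for j using Pmono Ps by metis
  have npos: "n > 0"
  proof -
    have "\<sigma> \<noteq> {#}" using assms(1) rpos unfolding is_partition_def by auto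
    then show ?thesis using assms(2) by (metis gr0I le_zero_eq size_eq_0_iff_empty)
  qed
  define m where "m = q div r"
  have qm: "q = m * r" using assms(4) m_def by simp
  define E where "E k t = (\<Union>j<s. {(t+j) mod n} \<times> {k*r + P j ..< k*r + P (Suc j)})" for k t
  have memE: "(i,v) \<in> E k t \<longleftrightarrow> (\<exists>j<s. i = (t+j) mod n \<and> k*r + P j \<le> v \<and> v < k*r + P (Suc j))"
    for i v k t unfolding E_def by auto
  have injh: "j < n \<Longrightarrow> j' < n \<Longrightarrow> (t+j) mod n = (t+j') mod n \<Longrightarrow> j = j'" for t j j'
    using mod_cancel_aux[of j t n j'] by (simp add: add.commute)
  define M where "M = {E k t | k t. k < m \<and> t < n}"
  define V where "V = sigma_vertices n q"
  have EV: "k < m \<Longrightarrow> E k t \<subseteq> V" for k t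
  proof
    fix x assume k: "k < m" and x: "x \<in> E k t"
    obtain i v where x': "x = (i,v)" by fastforce
    then obtain j where j: "j<s" "i = (t+j) mod n" "v < k*r + P (Suc j)" using x memE by blast
    have "v < k*r + r" using j Ple[of "Suc j"] by simp
    also have "\<dots> \<le> m*r" using k by (metis Suc_leI mult_Suc mult_le_mono1 add.commute)
    finally have "v < q" using qm by simp
    then show "x \<in> V" using x' j npos unfolding V_def sigma_vertices_def by auto
  qed
  have cover: "V \<subseteq> \<Union>M"
  proof
    fix x assume "x \<in> V"
    then obtain i v where x: "x = (i,v)" "i < n" "v < q" unfolding V_def sigma_vertices_def by auto
    define k where "k = v div r"
    define w where "w = v mod r"
    have km: "k < m" using x(3) qm rpos unfolding k_def
      by (simp add: less_mult_imp_div_less)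
    have "w < P s" using Ps rpos unfolding w_def by simp
    then obtain j where j: "j < s" "P j \<le> w" "w < P (Suc j)" using find_interval[of P, OF P0] by blast
    define t where "t = (i + n - j) mod n"
    have "(t + j) mod n = (i + n - j + j) mod n" unfolding t_def by (simp add: mod_add_left_eq)
    also have "\<dots> = i" using j(1) sn x(2) by simp
    finally have ti: "(t+j) mod n = i" .
    have v: "v = k*r + w" unfolding k_def w_def by simp
    have "(i,v) \<in> E k t" unfolding memE using j ti v by (intro exI[of _ j]) auto
    then have "x \<in> E k t" using x(1) by simp
    moreover have "t < n" using npos t_def by simp
    ultimately show "x \<in> \<Union>M" using km unfolding M_def by blast
  qed
  have disj: "E k t \<inter> E k' t' \<noteq> {} \<Longrightarrow> t < n \<Longrightarrow> t' < n \<Longrightarrow> E k t = E k' t'" for k t k' t'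
  proof -
    assume ne: "E k t \<inter> E k' t' \<noteq> {}" and tn: "t < n" "t' < n"
    then obtain i v where iv: "(i,v) \<in> E k t" "(i,v) \<in> E k' t'" by fast
    obtain j where j: "j<s" "i = (t+j) mod n" "k*r + P j \<le> v" "v < k*r + P (Suc j)" using iv(1) memE by blast
    obtain j' where j': "j'<s" "i = (t'+j') mod n" "k'*r + P j' \<le> v" "v < k'*r + P (Suc j')" using iv(2) memE by blast
    have "v div r = k" using j Ple[of "Suc j"] by (intro div_aux) auto
    moreover have "v div r = k'" using j' Ple[of "Suc j'"] by (intro div_aux) auto
    ultimately have kk: "k = k'" by simp
    note j2 = j[unfolded kk]
    have jj: "j = j'"
    proof (rule ccontr)
      assume "j \<noteq> j'"
      then consider "j < j'" | "j' < j" by linarith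
      then show False
      proof cases
        case 1 then have "P (Suc j) \<le> P j'" using Pmono by simp
        then show False using j2 j' by linarith
      next
        case 2 then have "P (Suc j') \<le> P j" using Pmono by simp
        then show False using j2 j' by linarith
      qed
    qed
    have "t = t'" using mod_cancel_aux[of t j n t'] j(2) j'(2) jj tn by simp
    then show ?thesis using kk by simp
  qed
  have edge: "E k t \<in> sigma_edges n r q \<sigma>" if k: "k < m" and t: "t < n" for k t
  proof -
    define c where "c i = card (E k t \<inter> ({i} \<times> {..<q}))" for i
    define h where "h j = (t + j) mod n" for j
    define g where "g j = (if j < s then a ! j else 0)" for j
    have inj: "inj_on h {..<n}" unfolding h_def inj_on_def using injh by blast
    have himg: "h ` {..<n} = {..<n}"
      using inj npos by (intro endo_inj_surj) (auto simp: h_def)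
    have cg: "c (h j) = g j" if jn: "j < n" for j
    proof (cases "j < s")
      case True
      have "E k t \<inter> ({h j} \<times> {..<q}) = {h j} \<times> {k*r + P j ..< k*r + P (Suc j)}"
      proof (intro set_eqI iffI)
        fix x assume "x \<in> E k t \<inter> ({h j} \<times> {..<q})"
        then obtain i v where x: "x = (i,v)" "(i,v) \<in> E k t" "i = h j" by auto
        then obtain j' where j': "j'<s" "i = (t+j') mod n" "k*r + P j' \<le> v" "v < k*r + P (Suc j')"
          using memE by blast
        have "j' = j" using injh[of j' j t] j' x(3) jn sn unfolding h_def by simp
        then show "x \<in> {h j} \<times> {k*r + P j ..< k*r + P (Suc j)}" using x j' by simp
      next
        fix x assume x: "x \<in> {h j} \<times> {k*r + P j ..< k*r + P (Suc j)}"
        then have "x \<in> E k t" using True unfolding E_def h_def by blast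
        with EV[OF k] have "x \<in> V" by blast
        then show "x \<in> E k t \<inter> ({h j} \<times> {..<q})" using x \<open>x \<in> E k t\<close>
          unfolding V_def sigma_vertices_def by auto
      qed
      then show ?thesis unfolding c_def g_def using True PSuc by (simp add: card_cartesian_product)
    next
      case False
      have "E k t \<inter> ({h j} \<times> {..<q}) = {}"
      proof (rule ccontr)
        assume "E k t \<inter> ({h j} \<times> {..<q}) \<noteq> {}"
        then obtain i v where x: "(i,v) \<in> E k t" "i = h j" by auto
        then obtain j' where j': "j'<s" "i = (t+j') mod n" using memE by blast
        have "j' = j" using injh[of j' j t] j' x(2) jn sn unfolding h_def by simp
        then show False using False j' by simp
      qed
      then show ?thesis unfolding c_def g_def using False by simp
    qed
    have img: "image_mset c (mset_set {..<n}) = image_mset g (mset_set {..<n})"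
    proof -
      have "image_mset c (mset_set {..<n}) = image_mset c (image_mset h (mset_set {..<n}))"
        using image_mset_mset_set[OF inj] himg by simp
      also have "\<dots> = image_mset (c \<circ> h) (mset_set {..<n})" by (simp add: multiset.map_comp)
      also have "\<dots> = image_mset g (mset_set {..<n})"
        by (intro image_mset_cong) (simp add: cg)
      finally show ?thesis .
    qed
    have filt: "filter_mset (\<lambda>x. x \<noteq> 0) (image_mset g (mset_set {..<n})) = \<sigma>"
    proof -
      have "mset_set {..<n} = mset ([0..<s] @ [s..<n])"
        using sn by (metis atLeast0LessThan mset_upt le_add_diff_inverse upt_add_eq_append zero_le)
      then have L: "image_mset g (mset_set {..<n}) = mset (map g [0..<s] @ map g [s..<n])"
        by simp
      have M1: "map g [0..<s] = a"
      proof -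
        have "map g [0..<s] = map (nth a) [0..<s]" by (intro map_cong) (auto simp: g_def)
        then show ?thesis by (simp add: s_def map_nth)
      qed
      have M2: "filter (\<lambda>x. x \<noteq> 0) (map g [s..<n]) = []"
        unfolding g_def by (simp add: filter_empty_conv)
      have M3: "filter (\<lambda>x. x \<noteq> 0) a = a" by (rule filter_True) (use a0 in \<open>auto intro: gr0I\<close>)
      have "filter_mset (\<lambda>x. x \<noteq> 0) (image_mset g (mset_set {..<n}))
          = mset (filter (\<lambda>x. x \<noteq> 0) (map g [0..<s] @ map g [s..<n]))"
        by (simp only: L mset_filter)
      also have "\<dots> = mset a" by (simp only: filter_append M1 M2 M3 append_Nil2)
      finally show ?thesis using a by simp
    qed
    have card: "card (E k t) = r"
    proof -
      have E_un: "E k t = (\<Union>i<n. E k t \<inter> ({i} \<times> {..<q}))"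
        using EV[OF k] unfolding V_def sigma_vertices_def by auto
      have "card (E k t) = (\<Sum>i<n. c i)" unfolding c_def
        by (subst E_un, rule card_UN_disjoint) auto
      also have "\<dots> = sum (c \<circ> h) {..<n}"
        using sum.reindex[OF inj, of c] himg by simp
      also have "\<dots> = sum g {..<n}" by (intro sum.cong) (auto simp: cg)
      also have "\<dots> = (\<Sum>j<s. a ! j)"
      proof -
        have "sum g {..<n} = sum g {..<s}"
          by (rule sum.mono_neutral_right) (use sn in \<open>auto simp: g_def\<close>)
        then show ?thesis by (simp add: g_def)
      qed
      finally show ?thesis using Ps P_def by simp
    qed
    have cc: "(\<lambda>i. card (E k t \<inter> ({i} \<times> {..<q}))) = c" by (simp add: c_def fun_eq_iff)
    show ?thesis unfolding sigma_edges_def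
    proof (intro CollectI conjI)
      show "E k t \<subseteq> sigma_vertices n q" using EV[OF k] V_def by simp
      show "card (E k t) = r" by (rule card)
      show "filter_mset (\<lambda>x. x \<noteq> 0) (image_mset (\<lambda>i. card (E k t \<inter> ({i} \<times> {..<q}))) (mset_set {..<n})) = \<sigma>"
        by (simp only: cc img filt)
    qed
  qed
  show ?thesis unfolding has_perfect_matching_def
  proof (intro exI[of _ M] conjI ballI impI)
    show "M \<subseteq> sigma_edges n r q \<sigma>" unfolding M_def using edge by blast
  next
    fix e f assume "e \<in> M" "f \<in> M" "e \<noteq> f"
    then show "e \<inter> f = {}" unfolding M_def using disj by blast
  next
    show "\<Union>M = sigma_vertices n q"
      using cover EV unfolding M_def V_def by blast
  qed
qed

end
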